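(* Let $G=(G_t)_{t\in\mathbb{Z}^N}$ be an $\mathbb{R}^n$-valued stationary increment field. Assume that for some $\delta>0$, $$\mathbb{E}\Big(\ln\|\Delta_{\mathbf 1}G\|\,\mathbb{1}_{\{\|\Delta_{\mathbf 1}G\|>1\}}\Big)^{N+\delta}<\infty,$$ where $\mathbf 1=(1,\dots,1)$ and $\|\cdot\|$ is the Euclidean norm. Then for every $N$-tuple $\Theta$ of pairwise commuting symmetric positive definite $n\times n$ matrices and every $t\in\mathbb{Z}^N$, the iterated limit $$\lim_{M_1\to\infty}\cdots\lim_{M_N\to\infty}\sum_{j_1=-M_1}^{t_1}\cdots\sum_{j_N=-M_N}^{t_N}e^{j\ast\Theta}\Delta_jG$$ converges almost surely (indeed the series is almost surely absolutely convergent); in particular $G\in\mathcal{G}_\Theta$. Moreover, if $G_t=0$ almost surely whenever $t_l=0$ for some $l\in\{1,\dots,N\}$, then the same conclusion holds with $\|\Delta_{\mathbf 1}G\|$ replaced by $\|G_{\mathbf 1}\|=\|G_{1,\dots,1}\|$ in the moment condition, and in this case $G\in\mathcal{G}_{\Theta,0}$ for all such $\Theta$.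
   Context: For $t\in\mathbb{Z}^N$ and an $N$-tuple $\Theta=(\Theta_1,\dots,\Theta_N)$ of $n\times n$ matrices, $t\ast\Theta=\sum_{j=1}^N t_j\Theta_j$. For a field $Z=(Z_t)_{t\in\mathbb{Z}^N}$, the unit cube increment is $\Delta_t Z=\sum_{i\in\{0,1\}^N}(-1)^{i_1+\dots+i_N}Z_{t_1-i_1,\dots,t_N-i_N}$. Equality in law of fields means equality of all finite-dimensional distributions. A field $G$ is a stationary increment field if $(\Delta_{t+s}G)_{t\in\mathbb{Z}^N}$ and $(\Delta_tG)_{t\in\mathbb{Z}^N}$ are equal in law for every $s\in\mathbb{Z}^N$. For $\Theta$ an $N$-tuple of pairwise commuting symmetric positive definite matrices, $\mathcal{G}_\Theta$ is the class of stationary increment fields $G$ such that $\lim_{M_1\to\infty}\cdots\lim_{M_N\to\infty}\sum_{j_1=-M_1}^{t_1}\cdots\sum_{j_N=-M_N}^{t_N}e^{j\ast\Theta}\Delta_jG$ converges in probability for every $t\in\mathbb{Z}^N$; $\mathcal{G}_{\Theta,0}$ is the subclass of $G\in\mathcal{G}_\Theta$ with $G_t=0$ a.s. whenever $t_l=0$ for some $l$. *)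

theory Defs
  imports "HOL-Analysis.Analysis" "HOL-Probability.Probability"
begin

text \<open>Lattice points in Z^N are functions from a finite index type 'd (with CARD('d) = N) to int.\<close>

definition cube_incr :: "(('d::finite \<Rightarrow> int) \<Rightarrow> 'v::real_vector) \<Rightarrow> ('d \<Rightarrow> int) \<Rightarrow> 'v" where
  "cube_incr Z t = (\<Sum>S\<in>Pow (UNIV::'d set).
      ((-1::real) ^ card S) *\<^sub>R Z (\<lambda>l. t l - (if l \<in> S then 1 else 0)))"

definition stationary_increment ::
  "'a measure \<Rightarrow> (('d::finite \<Rightarrow> int) \<Rightarrow> 'a \<Rightarrow> real^'n) \<Rightarrow> bool" where
  "stationary_increment M G \<longleftrightarrow>
     (\<forall>s S. finite S \<longrightarrow>
        distr M (PiM S (\<lambda>_. borel)) (\<lambda>\<omega>. \<lambda>t\<in>S. cube_incr (\<lambda>u. G u \<omega>) (\<lambda>l. t l + s l))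
      = distr M (PiM S (\<lambda>_. borel)) (\<lambda>\<omega>. \<lambda>t\<in>S. cube_incr (\<lambda>u. G u \<omega>) t))"

primrec mat_pow :: "real^'n^'n \<Rightarrow> nat \<Rightarrow> real^'n^'n" where
  "mat_pow A 0 = mat 1"
| "mat_pow A (Suc k) = A ** mat_pow A k"

definition mat_exp :: "real^'n^'n \<Rightarrow> real^'n^'n" where
  "mat_exp A = (\<Sum>k. (1 / fact k) *\<^sub>R mat_pow A k)"

definition sym_pos_def_mat :: "real^'n^'n \<Rightarrow> bool" where
  "sym_pos_def_mat A \<longleftrightarrow> transpose A = A \<and> (\<forall>x. x \<noteq> 0 \<longrightarrow> x \<bullet> (A *v x) > 0)"

definition admissible_Theta :: "('d \<Rightarrow> real^'n^'n) \<Rightarrow> bool" where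
  "admissible_Theta \<Theta> \<longleftrightarrow> (\<forall>l. sym_pos_def_mat (\<Theta> l)) \<and> (\<forall>l m. \<Theta> l ** \<Theta> m = \<Theta> m ** \<Theta> l)"

definition star_Theta :: "('d::finite \<Rightarrow> int) \<Rightarrow> ('d \<Rightarrow> real^'n^'n) \<Rightarrow> real^'n^'n" where
  "star_Theta j \<Theta> = (\<Sum>l\<in>UNIV. of_int (j l) *\<^sub>R \<Theta> l)"

definition box_sum ::
  "('d::finite \<Rightarrow> real^'n^'n) \<Rightarrow> (('d \<Rightarrow> int) \<Rightarrow> real^'n) \<Rightarrow> ('d \<Rightarrow> int) \<Rightarrow> ('d \<Rightarrow> nat) \<Rightarrow> real^'n" where
  "box_sum \<Theta> Z t Mv = (\<Sum>j\<in>{j. \<forall>l. - int (Mv l) \<le> j l \<and> j l \<le> t l}.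
       mat_exp (star_Theta j \<Theta>) *v cube_incr Z j)"

text \<open>Iterated limits: for a coordinate list [d1,...,dk], the limit in d1 is outermost
  and the limit in dk innermost.\<close>
fun ilim :: "'d list \<Rightarrow> (('d \<Rightarrow> nat) \<Rightarrow> 'b::t2_space) \<Rightarrow> ('d \<Rightarrow> nat) \<Rightarrow> 'b" where
  "ilim [] F = F"
| "ilim (d # ds) F = (\<lambda>Mv. lim (\<lambda>m. ilim ds F (Mv(d := m))))"

fun iconv :: "'d list \<Rightarrow> (('d \<Rightarrow> nat) \<Rightarrow> 'b::t2_space) \<Rightarrow> bool" where
  "iconv [] F = True"
| "iconv (d # ds) F = (iconv ds F \<and> (\<forall>Mv. convergent (\<lambda>m. ilim ds F (Mv(d := m)))))"

definition coords :: "('d::{finite,linorder}) list" where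
  "coords = sorted_list_of_set UNIV"

definition as_conclusion :: "'a measure \<Rightarrow> (('d::{finite,linorder} \<Rightarrow> int) \<Rightarrow> 'a \<Rightarrow> real^'n) \<Rightarrow> bool" where
  "as_conclusion M G \<longleftrightarrow>
    (\<forall>\<Theta> t. admissible_Theta \<Theta> \<longrightarrow>
      (AE \<omega> in M. iconv coords (box_sum \<Theta> (\<lambda>u. G u \<omega>) t)
          \<and> (\<lambda>j. norm (mat_exp (star_Theta j \<Theta>) *v cube_incr (\<lambda>u. G u \<omega>) j))
                summable_on {j. \<forall>l. j l \<le> t l}))"

definition log_moment :: "'a measure \<Rightarrow> ('a \<Rightarrow> real^'n) \<Rightarrow> real \<Rightarrow> real \<Rightarrow> bool" where
  "log_moment M X p \<delta> \<longleftrightarrow>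
     (\<integral>\<^sup>+ \<omega>. ennreal ((if norm (X \<omega>) > 1 then ln (norm (X \<omega>)) else 0) powr (p + \<delta>)) \<partial>M) < \<infinity>"

end

theory Submission
  imports Defs
begin


typedef (overloaded) ('n::finite) endo = "UNIV :: ((real^'n) \<Rightarrow>\<^sub>L (real^'n)) set" morphisms eop Eop by auto
setup_lifting type_definition_endo

instantiation endo :: (finite) real_normed_vector
begin
lift_definition norm_endo :: "'a endo \<Rightarrow> real" is norm .
lift_definition minus_endo :: "'a endo \<Rightarrow> 'a endo \<Rightarrow> 'a endo" is "(-)" .
lift_definition plus_endo :: "'a endo \<Rightarrow> 'a endo \<Rightarrow> 'a endo" is "(+)" .
lift_definition uminus_endo :: "'a endo \<Rightarrow> 'a endo" is "uminus" .
lift_definition zero_endo :: "'a endo" is 0 .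
lift_definition scaleR_endo :: "real \<Rightarrow> 'a endo \<Rightarrow> 'a endo" is "scaleR" .
definition dist_endo :: "'a endo \<Rightarrow> 'a endo \<Rightarrow> real" where "dist_endo a b = norm (a - b)"
definition [code del]:
  "(uniformity :: ('a endo \<times> 'a endo) filter) = (INF e\<in>{0 <..}. principal {(x, y). dist x y < e})"
definition open_endo :: "'a endo set \<Rightarrow> bool"
  where [code del]: "open_endo S = (\<forall>x\<in>S. \<forall>\<^sub>F (x', y) in uniformity. x' = x \<longrightarrow> y \<in> S)"
definition sgn_endo :: "'a endo \<Rightarrow> 'a endo" where "sgn_endo x = scaleR (inverse (norm x)) x"
instance
  apply standard
  unfolding dist_endo_def open_endo_def sgn_endo_def uniformity_endo_def
  apply (rule refl | (transfer, force simp: norm_triangle_ineq algebra_simps))+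
  done
end

instantiation endo :: (finite) real_normed_algebra_1
begin
lift_definition times_endo :: "'a endo \<Rightarrow> 'a endo \<Rightarrow> 'a endo" is "blinfun_compose" .
lift_definition one_endo :: "'a endo" is id_blinfun .
instance
proof
  show "0 \<noteq> (1::'a endo)"
  proof
    assume "0 = (1::'a endo)"
    hence "(0::(real^'a) \<Rightarrow>\<^sub>L (real^'a)) = id_blinfun" by transfer
    hence "blinfun_apply (0::(real^'a) \<Rightarrow>\<^sub>L (real^'a)) (axis undefined 1) = blinfun_apply id_blinfun (axis undefined 1)" by simp
    thus False by (simp add: axis_eq_0_iff)
  qed
qed (transfer; auto intro!: blinfun_eqI simp: blinfun.bilinear_simps norm_blinfun_compose)+
end


lemma norm_eop: "norm (eop x) = norm x" by transfer simp
lemma dist_eop: "dist (eop x) (eop y) = dist x y"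
  by (simp add: dist_norm dist_endo_def) (transfer, simp)

instance endo :: (finite) banach
proof
  fix X :: "nat \<Rightarrow> 'a endo"
  assume "Cauchy X"
  hence "Cauchy (\<lambda>n. eop (X n))" by (simp add: Cauchy_def dist_eop)
  then obtain L where L: "(\<lambda>n. eop (X n)) \<longlonglongrightarrow> L" using convergent_def Cauchy_convergent_iff by blast
  have "X \<longlonglongrightarrow> Eop L"
  proof (rule LIMSEQ_I)
    fix r :: real assume "r > 0"
    then obtain no where "\<forall>n\<ge>no. norm (eop (X n) - L) < r" using LIMSEQ_D[OF L] by blast
    moreover have "norm (X n - Eop L) = norm (eop (X n) - L)" for n
      by (simp add: minus_endo.rep_eq norm_endo.rep_eq Eop_inverse)
    ultimately show "\<exists>no. \<forall>n\<ge>no. norm (X n - Eop L) < r" by auto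
  qed
  thus "convergent X" by (auto simp: convergent_def)
qed


definition phi :: "real^'n^'n \<Rightarrow> 'n::finite endo" where
  "phi A = Eop (Blinfun (\<lambda>x. A *v x))"

lemma eop_phi[simp]: "blinfun_apply (eop (phi A)) x = A *v x"
  by (simp add: phi_def Eop_inverse bounded_linear_Blinfun_apply)

lemma eop_times[simp]: "blinfun_apply (eop (S * T)) x = blinfun_apply (eop S) (blinfun_apply (eop T) x)"
  by (simp add: times_endo.rep_eq)

lemma eop_one[simp]: "blinfun_apply (eop (1::'n::finite endo)) x = x"
  by (simp add: one_endo.rep_eq)

lemma eop_inject': "(\<And>x. blinfun_apply (eop S) x = blinfun_apply (eop T) x) \<Longrightarrow> S = T"
  by (metis blinfun_eqI eop_inject)

lemma phi_pow: "phi A ^ k = phi (mat_pow A k)"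
  by (induction k) (auto intro!: eop_inject' simp: matrix_vector_mul_assoc)

definition Rm :: "'n::finite endo \<Rightarrow> real^'n^'n" where
  "Rm T = matrix (blinfun_apply (eop T))"

lemma Rm_phi[simp]: "Rm (phi A) = A"
  unfolding Rm_def by (simp add: phi_def Eop_inverse bounded_linear_Blinfun_apply)

lemma Rm_apply: "Rm T *v x = blinfun_apply (eop T) x"
  unfolding Rm_def
  apply (rule matrix_works)
  using bounded_linear.linear[OF blinfun.bounded_linear_right[of "eop T"]]
  by (simp add: linear_def module_hom_def module_hom_axioms_def Real_Vector_Spaces.linear_def scalar_mult_eq_scaleR)

lemma bounded_linear_Rm: "bounded_linear (Rm :: 'n::finite endo \<Rightarrow> _)"
proof (rule bounded_linear_intro[where K="real CARD('n) * real CARD('n)"])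
  fix S T :: "'n endo" and r :: real
  show "Rm (S + T) = Rm S + Rm T"
    by (simp add: Rm_def matrix_def plus_endo.rep_eq blinfun.add_left vec_eq_iff)
  show "Rm (r *\<^sub>R T) = r *\<^sub>R Rm T"
    by (simp add: Rm_def matrix_def scaleR_endo.rep_eq vec_eq_iff blinfun.scaleR_left)
  have c: "\<bar>Rm T $ i $ j\<bar> \<le> norm T" for i j
  proof -
    have "\<bar>Rm T $ i $ j\<bar> = \<bar>blinfun_apply (eop T) (axis j 1) $ i\<bar>" by (simp add: Rm_def matrix_def)
    also have "\<dots> \<le> norm (blinfun_apply (eop T) (axis j 1))" by (rule component_le_norm_cart)
    also have "\<dots> \<le> norm (eop T) * norm (axis j (1::real))" by (rule norm_blinfun)
    finally show ?thesis by (simp add: norm_eop)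
  qed
  show "norm (Rm T) \<le> norm T * (real CARD('n) * real CARD('n))"
  proof -
    have "norm (Rm T) \<le> (\<Sum>i\<in>UNIV. norm (Rm T $ i))" by (simp add: norm_vec_def L2_set_le_sum)
    also have "\<dots> \<le> (\<Sum>i\<in>(UNIV::'n set). \<Sum>j\<in>(UNIV::'n set). \<bar>Rm T $ i $ j\<bar>)"
      by (intro sum_mono norm_le_l1_cart)
    also have "\<dots> \<le> (\<Sum>i\<in>(UNIV::'n set). \<Sum>j\<in>(UNIV::'n set). norm T)"
      by (intro sum_mono c)
    finally show ?thesis by (simp add: algebra_simps)
  qed
qed

lemma mat_exp_Rm: "mat_exp A = Rm (exp (phi A))"
proof -
  have S: "(\<lambda>k. phi A ^ k /\<^sub>R fact k) sums exp (phi A)"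
    unfolding exp_def by (rule summable_sums[OF summable_exp_generic])
  have "(\<lambda>k. (1 / fact k) *\<^sub>R mat_pow A k) sums Rm (exp (phi A))"
  proof -
    have "Rm (phi A ^ k /\<^sub>R fact k) = (1 / fact k) *\<^sub>R mat_pow A k" for k
      by (simp only: linear_scale[OF bounded_linear.linear[OF bounded_linear_Rm]] Rm_phi phi_pow)
        (simp add: divide_inverse_commute)
    thus ?thesis using bounded_linear.sums[OF bounded_linear_Rm S] by simp
  qed
  thus ?thesis unfolding mat_exp_def by (rule sums_unique[symmetric])
qed

lemma mat_exp_apply: "mat_exp A *v x = blinfun_apply (eop (exp (phi A))) x"
  by (simp add: mat_exp_Rm Rm_apply)

lemma bounded_linear_eop_apply: "bounded_linear (\<lambda>E::'n::finite endo. blinfun_apply (eop E) x)"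
proof (rule bounded_linear_intro[where K="norm x"])
  fix S T :: "'n endo" and r :: real
  show "blinfun_apply (eop (S + T)) x = blinfun_apply (eop S) x + blinfun_apply (eop T) x"
    by (simp add: plus_endo.rep_eq blinfun.add_left)
  show "blinfun_apply (eop (r *\<^sub>R T)) x = r *\<^sub>R blinfun_apply (eop T) x"
    by (simp add: scaleR_endo.rep_eq blinfun.scaleR_left)
  show "norm (blinfun_apply (eop T) x) \<le> norm T * norm x"
    using norm_blinfun[of "eop T" x] by (simp add: norm_eop)
qed

lemma mat_exp_bound:
  fixes A :: "real^'n::finite^'n"
  assumes Aq: "\<And>x. x \<bullet> (A *v x) \<le> \<mu> * (x \<bullet> x)"
  shows "norm (mat_exp A *v x) \<le> exp \<mu> * norm x"
proof -
  define T where "T = phi A"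
  define y where "y = (\<lambda>s::real. blinfun_apply (eop (exp (s *\<^sub>R T))) x)"
  have dy: "(y has_vector_derivative (A *v y s)) (at s)" for s
  proof -
    have "((\<lambda>s. exp (s *\<^sub>R T)) has_vector_derivative exp (s *\<^sub>R T) * T) (at s)"
      by (rule exp_scaleR_has_vector_derivative_right)
    from bounded_linear.has_vector_derivative[OF bounded_linear_eop_apply this, of x]
    have "(y has_vector_derivative blinfun_apply (eop (exp (s *\<^sub>R T) * T)) x) (at s)"
      by (simp add: y_def)
    also have "blinfun_apply (eop (exp (s *\<^sub>R T) * T)) x = A *v y s"
      by (simp only: exp_times_scaleR_commute eop_times) (simp add: T_def y_def)
    finally show ?thesis .
  qed
  define g where "g s = y s \<bullet> y s" for s
  have dg: "(g has_real_derivative (2 * (y s \<bullet> (A *v y s)))) (at s)" for s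
  proof -
    have "(g has_vector_derivative (y s \<bullet> (A *v y s) + (A *v y s) \<bullet> y s)) (at s)"
      unfolding g_def by (rule bounded_bilinear.has_vector_derivative[OF bounded_bilinear_inner dy dy])
    thus ?thesis by (simp add: has_real_derivative_iff_has_vector_derivative inner_commute)
  qed
  define h where "h s = exp (-2 * \<mu> * s) * g s" for s
  have "h 1 \<le> h 0"
  proof (rule DERIV_nonpos_imp_nonincreasing[of 0 1 h])
    fix s :: real assume "0 \<le> s" "s \<le> 1"
    have "(h has_real_derivative
            ((-2 * \<mu>) * exp (-2 * \<mu> * s) * g s + exp (-2 * \<mu> * s) * (2 * (y s \<bullet> (A *v y s))))) (at s)"
      unfolding h_def
      by (auto intro!: derivative_eq_intros dg simp: algebra_simps)
    moreover have "(-2 * \<mu>) * exp (-2 * \<mu> * s) * g s + exp (-2 * \<mu> * s) * (2 * (y s \<bullet> (A *v y s))) \<le> 0"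
    proof -
      have "y s \<bullet> (A *v y s) \<le> \<mu> * g s" using Aq by (simp add: g_def)
      hence "exp (-2 * \<mu> * s) * (2 * (y s \<bullet> (A *v y s))) \<le> exp (-2 * \<mu> * s) * (2 * (\<mu> * g s))"
        by (intro mult_left_mono) auto
      thus ?thesis by (simp add: algebra_simps)
    qed
    ultimately show "\<exists>d. (h has_real_derivative d) (at s) \<and> d \<le> 0" by blast
  qed simp
  moreover have "h 0 = norm x ^ 2" by (simp add: h_def g_def y_def power2_norm_eq_inner)
  moreover have "h 1 = exp (-2 * \<mu>) * norm (mat_exp A *v x) ^ 2"
    by (simp add: h_def g_def y_def T_def mat_exp_apply power2_norm_eq_inner)
  ultimately have "exp (-2 * \<mu>) * norm (mat_exp A *v x) ^ 2 \<le> norm x ^ 2" by simp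
  hence "norm (mat_exp A *v x) ^ 2 \<le> exp (2 * \<mu>) * norm x ^ 2"
    by (simp add: exp_minus field_simps)
  also have "\<dots> = (exp \<mu> * norm x) ^ 2"
    by (simp add: power_mult_distrib exp_double[symmetric] power2_eq_square mult_exp_exp)
  finally show ?thesis
    by (rule power2_le_imp_le) simp
qed

lemma mv_add: "(A + B) *v x = A *v x + B *v (x::real^'n::finite)"
  by (simp add: vec_eq_iff matrix_vector_mult_def sum.distrib algebra_simps)

lemma mv_scale: "(c *\<^sub>R A) *v x = c *\<^sub>R (A *v (x::real^'n::finite))"
  by (simp add: vec_eq_iff matrix_vector_mult_def sum_distrib_left algebra_simps)

lemma mv_sum: "finite F \<Longrightarrow> (\<Sum>l\<in>F. c l *\<^sub>R M l) *v x = (\<Sum>l\<in>F. c l *\<^sub>R (M l *v (x::real^'n::finite)))"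
  by (induction F rule: finite_induct) (auto simp: mv_add mv_scale)

lemma pd_lower:
  fixes B :: "real^'n::finite^'n"
  assumes "sym_pos_def_mat B"
  shows "\<exists>c>0. \<forall>x. c * (x \<bullet> x) \<le> x \<bullet> (B *v x)"
proof -
  have pos: "x \<noteq> 0 \<Longrightarrow> x \<bullet> (B *v x) > 0" for x using assms by (simp add: sym_pos_def_mat_def)
  have cont: "continuous_on (sphere 0 1) (\<lambda>x::real^'n. x \<bullet> (B *v x))"
    by (intro continuous_intros linear_continuous_on) (simp add: bounded_linear.linear)
  have ne: "sphere (0::real^'n) 1 \<noteq> {}"
  proof -
    have "axis undefined 1 \<in> sphere (0::real^'n) 1" by (simp add: sphere_def dist_norm)
    thus ?thesis by blast
  qed
  obtain u where u: "u \<in> sphere 0 1" and umin: "\<And>x. x \<in> sphere 0 1 \<Longrightarrow> u \<bullet> (B *v u) \<le> x \<bullet> (B *v x)"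
    using continuous_attains_inf[OF compact_sphere ne cont] by blast
  define c where "c = u \<bullet> (B *v u)"
  have "c > 0" unfolding c_def using u by (intro pos) auto
  moreover have "c * (x \<bullet> x) \<le> x \<bullet> (B *v x)" for x
  proof (cases "x = 0")
    case False
    define v where "v = (1 / norm x) *\<^sub>R x"
    have "v \<in> sphere 0 1" using False by (simp add: v_def sphere_def dist_norm)
    hence "c \<le> v \<bullet> (B *v v)" using umin c_def by blast
    also have "v \<bullet> (B *v v) = (1 / norm x)^2 * (x \<bullet> (B *v x))"
      by (simp add: v_def matrix_vector_mult_scaleR power2_eq_square)
    finally have "c * (norm x)^2 \<le> x \<bullet> (B *v x)"
      using False by (simp add: field_simps)
    thus ?thesis by (simp add: power2_norm_eq_inner)
  qed simp
  ultimately show ?thesis by blast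
qed

lemma mat_upper:
  fixes B :: "real^'n::finite^'n"
  shows "\<exists>K\<ge>0. \<forall>x. x \<bullet> (B *v x) \<le> K * (x \<bullet> x)"
proof -
  obtain K where K: "K > 0" "\<And>x. norm (B *v x) \<le> norm x * K"
    using bounded_linear.pos_bounded[OF matrix_vector_mul_bounded_linear[of B]] by blast
  have "x \<bullet> (B *v x) \<le> K * (x \<bullet> x)" for x
  proof -
    have "x \<bullet> (B *v x) \<le> norm x * norm (B *v x)" by (rule norm_cauchy_schwarz)
    also have "\<dots> \<le> norm x * (norm x * K)" by (intro mult_left_mono K) auto
    finally show ?thesis by (simp add: power2_norm_eq_inner[symmetric] power2_eq_square algebra_simps)
  qed
  thus ?thesis using K by (intro exI[of _ K]) auto
qed

lemma term_bound:
  fixes \<Theta> :: "'d::finite \<Rightarrow> real^'n::finite^'n" and t :: "'d \<Rightarrow> int"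
  assumes "admissible_Theta \<Theta>"
  shows "\<exists>lam>0. \<exists>C. \<forall>k::'d\<Rightarrow>nat. \<forall>x.
     norm (mat_exp (star_Theta (\<lambda>l. t l - int (k l)) \<Theta>) *v x) \<le> exp (C - lam * (\<Sum>l\<in>UNIV. real (k l))) * norm x"
proof -
  have "\<forall>l. \<exists>c>0. \<forall>x. c * (x \<bullet> x) \<le> x \<bullet> (\<Theta> l *v x)"
    using assms pd_lower by (auto simp: admissible_Theta_def)
  then obtain lf where lf: "\<And>l. lf l > 0" "\<And>l x. lf l * (x \<bullet> x) \<le> x \<bullet> (\<Theta> l *v x)" by metis
  have "\<forall>l. \<exists>K\<ge>0. \<forall>x. x \<bullet> (\<Theta> l *v x) \<le> K * (x \<bullet> x)"
    using mat_upper by blast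
  then obtain Kf where Kf: "\<And>l. Kf l \<ge> 0" "\<And>l x. x \<bullet> (\<Theta> l *v x) \<le> Kf l * (x \<bullet> x)" by metis
  define lam where "lam = Min (range lf)"
  have lam_pos: "lam > 0" unfolding lam_def using lf(1) by (subst Min_gr_iff) auto
  have lam_le: "lam \<le> lf l" for l unfolding lam_def by (rule Min_le) auto
  define C where "C = (\<Sum>l\<in>UNIV. \<bar>real_of_int (t l)\<bar> * Kf l)"
  have "norm (mat_exp (star_Theta (\<lambda>l. t l - int (k l)) \<Theta>) *v x) \<le> exp (C - lam * (\<Sum>l\<in>UNIV. real (k l))) * norm x"
    for k :: "'d \<Rightarrow> nat" and x
  proof (rule mat_exp_bound)
    fix y :: "real^'n"
    have eq: "y \<bullet> (star_Theta (\<lambda>l. t l - int (k l)) \<Theta> *v y)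
       = (\<Sum>l\<in>UNIV. real_of_int (t l - int (k l)) * (y \<bullet> (\<Theta> l *v y)))"
      by (simp add: star_Theta_def mv_sum inner_sum_right)
    have each: "real_of_int (t l - int (k l)) * (y \<bullet> (\<Theta> l *v y))
        \<le> \<bar>real_of_int (t l)\<bar> * Kf l * (y \<bullet> y) - lam * real (k l) * (y \<bullet> y)" for l
    proof -
      have "0 \<le> lf l * (y \<bullet> y)" using lf(1)[of l] by simp
      hence q0: "0 \<le> y \<bullet> (\<Theta> l *v y)" using lf(2)[of l y] by linarith
      have a: "real_of_int (t l) * (y \<bullet> (\<Theta> l *v y)) \<le> \<bar>real_of_int (t l)\<bar> * Kf l * (y \<bullet> y)"
      proof -
        have "real_of_int (t l) * (y \<bullet> (\<Theta> l *v y)) \<le> \<bar>real_of_int (t l)\<bar> * (y \<bullet> (\<Theta> l *v y))"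
          using q0 by (intro mult_right_mono) auto
        also have "\<dots> \<le> \<bar>real_of_int (t l)\<bar> * (Kf l * (y \<bullet> y))"
          using Kf(2) by (intro mult_left_mono) auto
        finally show ?thesis by (simp add: mult.assoc)
      qed
      have b: "lam * real (k l) * (y \<bullet> y) \<le> real (k l) * (y \<bullet> (\<Theta> l *v y))"
      proof -
        have "lam * (y \<bullet> y) \<le> lf l * (y \<bullet> y)" using lam_le by (intro mult_right_mono) auto
        also have "\<dots> \<le> y \<bullet> (\<Theta> l *v y)" by (rule lf(2))
        finally have "real (k l) * (lam * (y \<bullet> y)) \<le> real (k l) * (y \<bullet> (\<Theta> l *v y))"
          by (intro mult_left_mono) auto
        thus ?thesis by (simp add: algebra_simps)
      qed
      show ?thesis using a b by (simp add: algebra_simps)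
    qed
    have "y \<bullet> (star_Theta (\<lambda>l. t l - int (k l)) \<Theta> *v y)
        \<le> (\<Sum>l\<in>UNIV. \<bar>real_of_int (t l)\<bar> * Kf l * (y \<bullet> y) - lam * real (k l) * (y \<bullet> y))"
      unfolding eq by (intro sum_mono each)
    also have "\<dots> = (C - lam * (\<Sum>l\<in>UNIV. real (k l))) * (y \<bullet> y)"
      by (simp add: C_def sum_subtractf sum_distrib_left sum_distrib_right algebra_simps)
    finally show "y \<bullet> (star_Theta (\<lambda>l. t l - int (k l)) \<Theta> *v y) \<le> (C - lam * (\<Sum>l\<in>UNIV. real (k l))) * (y \<bullet> y)" .
  qed
  thus ?thesis using lam_pos by blast
qed



lemma prod_summable:
  fixes f :: "'d::finite \<Rightarrow> nat \<Rightarrow> real"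
  assumes nn: "\<And>l n. f l n \<ge> 0" and sm: "\<And>l. summable (f l)"
  shows "(\<lambda>k::'d\<Rightarrow>nat. \<Prod>l\<in>UNIV. f l (k l)) summable_on UNIV"
proof -
  have "Infinite_Set_Sum.abs_summable_on (f l) UNIV" for l
  proof -
    have "(\<lambda>x. norm (f l x)) summable_on UNIV" using sm nn by (simp add: summable_on_UNIV_nonneg_real_iff)
    thus ?thesis by (simp only: abs_summable_equivalent[symmetric])
  qed
  hence "Infinite_Set_Sum.abs_summable_on (\<lambda>k::'d\<Rightarrow>nat. \<Prod>l\<in>UNIV. f l (k l)) (PiE UNIV (\<lambda>_. UNIV))"
    by (intro abs_summable_on_prod_PiE) auto
  hence "Infinite_Sum.abs_summable_on (\<lambda>k::'d\<Rightarrow>nat. \<Prod>l\<in>UNIV. f l (k l)) UNIV"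
    by (simp only: abs_summable_equivalent PiE_UNIV)
  moreover have "norm (\<Prod>l\<in>UNIV. f l (k l)) = (\<Prod>l\<in>UNIV. f l (k l))" for k
    using nn by (simp add: prod_nonneg)
  ultimately show ?thesis by simp
qed

lemma bc_countable:
  fixes A :: "'k::countable \<Rightarrow> 'a set"
  assumes "finite_measure M" and sets: "\<And>k. A k \<in> sets M"
    and sm: "(\<lambda>k. measure M (A k)) summable_on UNIV"
  shows "AE \<omega> in M. finite {k. \<omega> \<in> A k}"
proof -
  interpret finite_measure M by fact
  define B where "B n = (if n \<in> range (to_nat :: 'k \<Rightarrow> nat) then A (from_nat n) else {})" for n
  have Bs: "B n \<in> sets M" for n by (simp add: B_def sets)
  have "(\<lambda>n. measure M (B n)) summable_on range (to_nat :: 'k \<Rightarrow> nat)"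
  proof -
    have "((\<lambda>n. measure M (B n)) \<circ> (to_nat :: 'k \<Rightarrow> nat)) = (\<lambda>k. measure M (A k))"
    proof
      fix k :: 'k
      have "to_nat k \<in> range (to_nat :: 'k \<Rightarrow> nat)" by (rule rangeI)
      thus "((\<lambda>n. measure M (B n)) \<circ> (to_nat :: 'k \<Rightarrow> nat)) k = measure M (A k)"
        by (simp add: B_def)
    qed
    thus ?thesis using sm by (subst summable_on_reindex) (auto intro: inj_on_subset[OF inj_to_nat])
  qed
  hence "(\<lambda>n. measure M (B n)) summable_on UNIV"
    by (subst summable_on_cong_neutral[where T="range to_nat" and g="\<lambda>n. measure M (B n)"]) (auto simp: B_def)
  hence "summable (\<lambda>n. measure M (B n))"
    by (simp add: summable_on_UNIV_nonneg_real_iff)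
  hence "AE x in M. eventually (\<lambda>n. x \<in> space M - B n) sequentially"
    by (intro borel_cantelli_AE1 Bs) (auto simp: emeasure_eq_measure)
  thus ?thesis
  proof (rule AE_mp, intro AE_I2 impI)
    fix \<omega> assume "eventually (\<lambda>n. \<omega> \<in> space M - B n) sequentially"
    then obtain N where N: "\<And>n. n \<ge> N \<Longrightarrow> \<omega> \<notin> B n" by (auto simp: eventually_sequentially)
    have "{k. \<omega> \<in> A k} \<subseteq> from_nat ` {..<N}"
    proof
      fix k assume "k \<in> {k. \<omega> \<in> A k}"
      hence "\<omega> \<in> B (to_nat k)" by (simp add: B_def)
      hence "to_nat k < N" using N not_le by blast
      thus "k \<in> from_nat ` {..<N}" by (metis from_nat_to_nat image_eqI lessThan_iff)
    qed
    thus "finite {k. \<omega> \<in> A k}" by (rule finite_subset) auto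
  qed
qed


lemma as_summable:
  fixes Z :: "('d::finite \<Rightarrow> nat) \<Rightarrow> 'a \<Rightarrow> real" and Zo :: "'a \<Rightarrow> real"
  assumes "prob_space M"
    and measZ[measurable]: "\<And>k. Z k \<in> borel_measurable M" and measZo[measurable]: "Zo \<in> borel_measurable M"
    and nn: "\<And>k \<omega>. Z k \<omega> \<ge> 0"
    and ident: "\<And>k r. emeasure M {\<omega>\<in>space M. Z k \<omega> > r} = emeasure M {\<omega>\<in>space M. Zo \<omega> > r}"
    and mom: "(\<integral>\<^sup>+\<omega>. ennreal ((if Zo \<omega> > 1 then ln (Zo \<omega>) else 0) powr p) \<partial>M) < \<infinity>"
    and p: "p > real CARD('d)"
    and lam: "lam > 0"
  shows "AE \<omega> in M. (\<lambda>k. exp (- lam * (\<Sum>l\<in>UNIV. real (k l))) * Z k \<omega>) summable_on UNIV"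
proof -
  interpret prob_space M by fact
  define b where "b = lam / 2"
  have b: "b > 0" using lam by (simp add: b_def)
  define d where "d = real CARD('d)"
  have d: "d \<ge> 1" by (simp add: d_def)
  define S where "S k = (\<Sum>l\<in>UNIV. real (k l) + 1)" for k :: "'d \<Rightarrow> nat"
  have S1: "S k \<ge> 1" for k
  proof -
    have "S k \<ge> (\<Sum>l\<in>(UNIV::'d set). (1::real))" unfolding S_def by (intro sum_mono) auto
    moreover have "(\<Sum>l\<in>(UNIV::'d set). (1::real)) \<ge> 1" by simp
    ultimately show ?thesis by linarith
  qed
  define L where "L \<omega> = (if Zo \<omega> > 1 then ln (Zo \<omega>) else 0) powr p" for \<omega>
  have measL[measurable]: "L \<in> borel_measurable M" unfolding L_def by measurable
  define I where "I = enn2real (\<integral>\<^sup>+\<omega>. ennreal (L \<omega>) \<partial>M)"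
  have I: "(\<integral>\<^sup>+\<omega>. ennreal (L \<omega>) \<partial>M) = ennreal I" "I \<ge> 0"
    using mom by (auto simp: I_def L_def less_top[symmetric] intro!: ennreal_enn2real[symmetric])
  define A where "A k = {\<omega>\<in>space M. Z k \<omega> > exp (b * S k)}" for k
  have A_sets: "A k \<in> sets M" for k unfolding A_def by measurable
  have markov: "measure M (A k) \<le> I / (b * S k) powr p" for k
  proof -
    define c where "c = 1 / (b * S k) powr p"
    have bS: "b * S k > 0" using b S1[of k] by (simp add: zero_less_mult_iff)
    have sub: "{\<omega>\<in>space M. Zo \<omega> > exp (b * S k)} \<subseteq> {x\<in>space M. 1 \<le> ennreal c * ennreal (L x)}"
    proof safe
      fix \<omega> assume \<omega>: "\<omega> \<in> space M" "Zo \<omega> > exp (b * S k)"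
      have "exp (b * S k) > 1" using bS by simp
      hence Z1: "Zo \<omega> > 1" using \<omega> by linarith
      have "ln (exp (b * S k)) < ln (Zo \<omega>)" using \<omega>(2) Z1 by (subst ln_less_cancel_iff) auto
      hence lnZ: "ln (Zo \<omega>) > b * S k" by simp
      have p0: "p \<ge> 0" using p by linarith
      have "(b * S k) powr p \<le> ln (Zo \<omega>) powr p"
        by (rule powr_mono2[OF p0]) (use bS lnZ in auto)
      hence "L \<omega> \<ge> (b * S k) powr p" unfolding L_def using Z1 by simp
      moreover have bSp: "(b * S k) powr p > 0" using b S1[of k] by simp
      ultimately have "1 \<le> L \<omega> / (b * S k) powr p" by simp
      hence cL: "1 \<le> c * L \<omega>" unfolding c_def by simp
      have "c \<ge> 0" unfolding c_def by simp
      hence "ennreal c * ennreal (L \<omega>) = ennreal (c * L \<omega>)"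
        by (intro ennreal_mult[symmetric]) (auto simp: L_def)
      also have "ennreal 1 \<le> ennreal (c * L \<omega>)" using cL by (rule ennreal_leI)
      finally show "1 \<le> ennreal c * ennreal (L \<omega>)" by simp
    qed
    have "emeasure M (A k) = emeasure M {\<omega>\<in>space M. Zo \<omega> > exp (b * S k)}"
      unfolding A_def by (rule ident)
    also have "\<dots> \<le> emeasure M {x\<in>space M. 1 \<le> ennreal c * ennreal (L x)}"
      by (rule emeasure_mono[OF sub]) measurable
    also have "\<dots> \<le> ennreal c * (\<integral>\<^sup>+x. ennreal (L x) * indicator (space M) x \<partial>M)"
      by (rule nn_integral_Markov_inequality) measurable
    also have "(\<integral>\<^sup>+x. ennreal (L x) * indicator (space M) x \<partial>M) = (\<integral>\<^sup>+x. ennreal (L x) \<partial>M)"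
      by (intro nn_integral_cong) (simp add: indicator_def)
    also have "ennreal c * \<dots> = ennreal (c * I)"
      using I by (simp add: c_def ennreal_mult[symmetric])
    finally have "measure M (A k) \<le> c * I"
      using I by (simp add: emeasure_eq_measure c_def)
    thus ?thesis by (simp add: c_def)
  qed
  define q where "q = p / d"
  have q: "q > 1" using p d by (simp add: q_def d_def)
  have prodb: "(b * S k) powr p \<ge> b powr p * (\<Prod>l\<in>UNIV. (real (k l) + 1) powr q)" for k
  proof -
    have "(\<Prod>l\<in>UNIV. real (k l) + 1) \<le> (\<Prod>l\<in>(UNIV::'d set). S k)"
    proof (intro prod_mono conjI)
      fix l :: 'd
      show "real (k l) + 1 \<le> S k" unfolding S_def
        by (rule member_le_sum[where f="\<lambda>l. real (k l) + 1"]) auto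
    qed auto
    also have "\<dots> = S k ^ CARD('d)" by simp
    finally have "(\<Prod>l\<in>UNIV. real (k l) + 1) powr q \<le> (S k ^ CARD('d)) powr q"
      using q by (intro powr_mono2) (auto intro: prod_nonneg)
    also have "(S k ^ CARD('d)) powr q = S k powr p"
      using S1[of k] d by (simp add: powr_realpow[symmetric] powr_powr q_def d_def)
    finally have "(\<Prod>l\<in>UNIV. (real (k l) + 1) powr q) \<le> S k powr p"
      by (simp add: prod_powr_distrib)
    hence "b powr p * (\<Prod>l\<in>UNIV. (real (k l) + 1) powr q) \<le> b powr p * S k powr p"
      by (intro mult_left_mono) auto
    also have "\<dots> = (b * S k) powr p" using b S1[of k] by (simp add: powr_mult)
    finally show ?thesis .
  qed
  have mbound: "measure M (A k) \<le> (I / b powr p) * (\<Prod>l\<in>UNIV. (real (k l) + 1) powr (-q))" for k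
  proof -
    have pos: "(\<Prod>l\<in>UNIV. (real (k l) + 1) powr q) > 0" by (intro prod_pos) auto
    have "measure M (A k) \<le> I / (b * S k) powr p" by (rule markov)
    also have "\<dots> \<le> I / (b powr p * (\<Prod>l\<in>UNIV. (real (k l) + 1) powr q))"
    proof (rule divide_left_mono[OF prodb I(2)])
      have "(b * S k) powr p > 0" using b S1[of k] by simp
      moreover have "b powr p * (\<Prod>l\<in>UNIV. (real (k l) + 1) powr q) > 0" using b pos by simp
      ultimately show "0 < (b * S k) powr p * (b powr p * (\<Prod>l\<in>UNIV. (real (k l) + 1) powr q))"
        by (rule mult_pos_pos)
    qed
    also have "\<dots> = (I / b powr p) * (\<Prod>l\<in>UNIV. (real (k l) + 1) powr (-q))"
      by (simp add: powr_minus prod_inversef[symmetric] divide_inverse)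
    finally show ?thesis .
  qed
  have sq: "summable (\<lambda>n. (real n + 1) powr (-q))"
  proof -
    have "summable (\<lambda>n. real n powr (-q))" using q by (simp add: summable_real_powr_iff)
    hence "summable (\<lambda>n. real (Suc n) powr (-q))" by (subst summable_Suc_iff)
    thus ?thesis by (simp add: add.commute)
  qed
  have "(\<lambda>k::'d\<Rightarrow>nat. \<Prod>l\<in>UNIV. (real (k l) + 1) powr (-q)) summable_on UNIV"
    by (rule prod_summable) (use sq in auto)
  hence "(\<lambda>k::'d\<Rightarrow>nat. (I / b powr p) * (\<Prod>l\<in>UNIV. (real (k l) + 1) powr (-q))) summable_on UNIV"
    by (rule summable_on_cmult_right)
  hence "(\<lambda>k. measure M (A k)) summable_on UNIV"
    by (rule summable_on_comparison_test) (use mbound in auto)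
  hence AEfin: "AE \<omega> in M. finite {k. \<omega> \<in> A k}"
    by (intro bc_countable A_sets) (simp add: finite_measure_axioms)
  define g where "g k = exp (b * d) * (\<Prod>l\<in>UNIV. exp (-b) ^ k l)" for k :: "'d \<Rightarrow> nat"
  have gsum: "g summable_on UNIV"
  proof -
    have "(\<lambda>k::'d\<Rightarrow>nat. \<Prod>l\<in>UNIV. exp (-b) ^ k l) summable_on UNIV"
      by (rule prod_summable) (use b in \<open>auto intro!: summable_geometric\<close>)
    thus ?thesis unfolding g_def by (rule summable_on_cmult_right)
  qed
  show ?thesis
    using AEfin
  proof (rule AE_mp, intro AE_I2 impI)
    fix \<omega> assume \<omega>: "\<omega> \<in> space M" and fin: "finite {k. \<omega> \<in> A k}"
    define F where "F = {k. \<omega> \<in> A k}"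
    let ?t = "\<lambda>k. exp (- lam * (\<Sum>l\<in>UNIV. real (k l))) * Z k \<omega>"
    have "?t summable_on (UNIV - F)"
    proof (rule summable_on_comparison_test[OF summable_on_subset_banach[OF gsum]])
      fix k assume "k \<in> UNIV - F"
      hence Zk: "Z k \<omega> \<le> exp (b * S k)" using \<omega> by (auto simp: F_def A_def)
      have "?t k \<le> exp (- lam * (\<Sum>l\<in>UNIV. real (k l))) * exp (b * S k)"
        by (intro mult_left_mono Zk) auto
      also have "\<dots> = exp (b * d - b * (\<Sum>l\<in>UNIV. real (k l)))"
      proof -
        have "S k = (\<Sum>l\<in>UNIV. real (k l)) + d" by (simp add: S_def sum.distrib d_def)
        thus ?thesis by (simp add: mult_exp_exp b_def algebra_simps)
      qed
      also have "\<dots> = g k"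
        proof -
        have "(\<Prod>l\<in>UNIV. exp (-b) ^ k l) = (\<Prod>l\<in>UNIV. exp (real (k l) * (-b)))"
          by (intro prod.cong refl) (metis exp_of_nat_mult of_nat_id)
        also have "\<dots> = exp (\<Sum>l\<in>UNIV. real (k l) * (-b))" by (simp add: exp_sum)
        also have "\<dots> = exp (- (b * (\<Sum>l\<in>UNIV. real (k l))))"
          by (simp add: sum_distrib_left sum_negf mult.commute)
        finally show ?thesis by (simp add: g_def mult_exp_exp)
      qed
      finally show "?t k \<le> g k" .
      show "0 \<le> ?t k" using nn by simp
    qed auto
    moreover have "?t summable_on F" using fin by (simp add: F_def)
    ultimately have "?t summable_on ((UNIV - F) \<union> F)"
      by (intro summable_on_Un_disjoint) auto
    thus "?t summable_on UNIV" by simp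
  qed
qed




lemma tendsto_infsum_incr:
  fixes f :: "'a \<Rightarrow> 'b::banach"
  assumes fs: "f abs_summable_on B" and sub: "\<And>m. C m \<subseteq> B"
    and mono: "\<And>m n. m \<le> n \<Longrightarrow> C m \<subseteq> C n" and cov: "\<And>x. x \<in> B \<Longrightarrow> \<exists>m. x \<in> C m"
  shows "(\<lambda>m. infsum f (C m)) \<longlonglongrightarrow> infsum f B"
proof (rule LIMSEQ_I)
  fix e :: real assume e: "e > 0"
  define g where "g = (\<lambda>x. norm (f x))"
  have gs: "g summable_on B" using fs by (simp add: g_def)
  have gsC: "g summable_on C m" for m by (rule summable_on_subset_banach[OF gs sub])
  have fsB: "f summable_on B" by (rule abs_summable_summable[OF fs])
  have fsC: "f summable_on C m" for m by (rule summable_on_subset_banach[OF fsB sub])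
  obtain F where F: "finite F" "F \<subseteq> B" "dist (sum g F) (infsum g B) \<le> e / 2"
    using infsum_finite_approximation[OF gs, of "e/2"] e by auto
  have "\<forall>x\<in>F. \<exists>m. x \<in> C m" using F cov by blast
  then obtain mf where mf: "\<And>x. x \<in> F \<Longrightarrow> x \<in> C (mf x)" by metis
  define N where "N = Max (insert 0 (mf ` F))"
  have FC: "F \<subseteq> C m" if "m \<ge> N" for m
  proof
    fix x assume x: "x \<in> F"
    have "mf x \<le> N" unfolding N_def using F(1) x by (intro Max_ge) auto
    thus "x \<in> C m" using mono[of "mf x" m] mf[OF x] that by auto
  qed
  have "norm (infsum f (C m) - infsum f B) < e" if "m \<ge> N" for m
  proof -
    have "infsum f B - infsum f (C m) = infsum f (B - C m)"
      by (rule infsum_Diff[symmetric, OF fsB fsC sub])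
    hence "norm (infsum f (C m) - infsum f B) = norm (infsum f (B - C m))"
      by (metis norm_minus_commute)
    also have "\<dots> \<le> infsum g (B - C m)"
      unfolding g_def by (rule norm_infsum_bound) (use summable_on_subset_banach[OF gs] in \<open>auto simp: g_def\<close>)
    also have "\<dots> = infsum g B - infsum g (C m)"
      by (rule infsum_Diff[OF gs gsC sub])
    also have "sum g F \<le> infsum g (C m)"
      by (rule finite_sum_le_infsum[OF gsC F(1) FC[OF that]]) (simp add: g_def)
    hence "infsum g B - infsum g (C m) \<le> infsum g B - sum g F" by simp
    also have "\<dots> \<le> e / 2" using F(3) unfolding dist_real_def by linarith
    also have "\<dots> < e" using e by simp
    finally show ?thesis .
  qed
  thus "\<exists>no. \<forall>n\<ge>no. norm (infsum f (C n) - infsum f B) < e" by blast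
qed

definition Bx :: "('d \<Rightarrow> int) \<Rightarrow> 'd list \<Rightarrow> ('d \<Rightarrow> nat) \<Rightarrow> ('d \<Rightarrow> int) set" where
  "Bx t ds Mv = {j. (\<forall>l. j l \<le> t l) \<and> (\<forall>l. l \<notin> set ds \<longrightarrow> - int (Mv l) \<le> j l)}"

lemma iconv_gen:
  fixes f :: "('d::finite \<Rightarrow> int) \<Rightarrow> 'b::banach" and t :: "'d \<Rightarrow> int"
  assumes fs: "f abs_summable_on {j. \<forall>l. j l \<le> t l}"
    and F: "F = (\<lambda>Mv. \<Sum>j\<in>{j. \<forall>l. - int (Mv l) \<le> j l \<and> j l \<le> t l}. f j)"
  shows "distinct ds \<Longrightarrow> iconv ds F \<and> (\<forall>Mv. ilim ds F Mv = infsum f (Bx t ds Mv))"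
proof (induction ds)
  case Nil
  have "ilim [] F Mv = infsum f (Bx t [] Mv)" for Mv
  proof -
    have eq: "{j. \<forall>l. - int (Mv l) \<le> j l \<and> j l \<le> t l} = Bx t [] Mv" by (auto simp: Bx_def)
    have "Bx t [] Mv \<subseteq> PiE UNIV (\<lambda>l. {- int (Mv l)..t l})" by (auto simp: Bx_def)
    moreover have "finite (PiE UNIV (\<lambda>l. {- int (Mv l)..t l}))" by (intro finite_PiE) auto
    ultimately have "finite (Bx t [] Mv)" by (rule finite_subset)
    thus ?thesis by (simp add: F eq)
  qed
  thus ?case by simp
next
  case (Cons d ds)
  hence d: "d \<notin> set ds" and IH: "iconv ds F" "\<And>Mv. ilim ds F Mv = infsum f (Bx t ds Mv)" by auto
  have lim: "(\<lambda>m. ilim ds F (Mv(d := m))) \<longlonglongrightarrow> infsum f (Bx t (d # ds) Mv)" for Mv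
  proof -
    have fs': "f abs_summable_on Bx t (d # ds) Mv"
      by (rule summable_on_subset_banach[OF fs]) (auto simp: Bx_def)
    have "(\<lambda>m. infsum f (Bx t ds (Mv(d := m)))) \<longlonglongrightarrow> infsum f (Bx t (d # ds) Mv)"
    proof (rule tendsto_infsum_incr[OF fs'])
      show "Bx t ds (Mv(d := m)) \<subseteq> Bx t (d # ds) Mv" for m
        using d by (auto simp: Bx_def)
      show "Bx t ds (Mv(d := m)) \<subseteq> Bx t ds (Mv(d := n))" if "m \<le> n" for m n
        using that d by (auto simp: Bx_def)
      show "\<exists>m. x \<in> Bx t ds (Mv(d := m))" if "x \<in> Bx t (d # ds) Mv" for x
      proof (intro exI[of _ "nat (- x d)"])
        show "x \<in> Bx t ds (Mv(d := nat (- x d)))" using that d by (auto simp: Bx_def)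
      qed
    qed
    thus ?thesis by (simp add: IH(2))
  qed
  show ?case
  proof
    show "iconv (d # ds) F" using IH(1) lim by (auto simp: convergent_def)
    show "\<forall>Mv. ilim (d # ds) F Mv = infsum f (Bx t (d # ds) Mv)"
      using lim by (simp add: limI)
  qed
qed

lemma iconv_coords:
  fixes f :: "('d::{finite,linorder} \<Rightarrow> int) \<Rightarrow> 'b::banach" and t :: "'d \<Rightarrow> int"
  assumes fs: "f abs_summable_on {j. \<forall>l. j l \<le> t l}"
  shows "iconv coords (\<lambda>Mv. \<Sum>j\<in>{j. \<forall>l. - int (Mv l) \<le> j l \<and> j l \<le> t l}. f j)"
  using iconv_gen[OF fs refl, of coords] by (simp add: coords_def)




lemma cube_meas:
  fixes G :: "('d::finite \<Rightarrow> int) \<Rightarrow> 'a \<Rightarrow> real^'n"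
  assumes "\<And>t. G t \<in> borel_measurable M"
  shows "(\<lambda>\<omega>. cube_incr (\<lambda>u. G u \<omega>) t) \<in> borel_measurable M"
  unfolding cube_incr_def
  by (rule borel_measurable_sum, rule borel_measurable_scaleR) (simp_all add: assms)

lemma ident_distr:
  fixes G :: "('d::finite \<Rightarrow> int) \<Rightarrow> 'a \<Rightarrow> real^'n"
  assumes meas: "\<And>t. G t \<in> borel_measurable M" and st: "stationary_increment M G"
  shows "emeasure M {\<omega>\<in>space M. r < norm (cube_incr (\<lambda>u. G u \<omega>) j)}
       = emeasure M {\<omega>\<in>space M. r < norm (cube_incr (\<lambda>u. G u \<omega>) (\<lambda>_. 1))}"
proof -
  define one :: "'d \<Rightarrow> int" where "one = (\<lambda>_. 1)"
  define s where "s = (\<lambda>l. j l - 1)"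
  define N where "N = PiM {one} (\<lambda>_. borel :: (real^'n) measure)"
  define X where "X t \<omega> = cube_incr (\<lambda>u. G u \<omega>) t" for t \<omega>
  have mX[measurable]: "X t \<in> borel_measurable M" for t unfolding X_def by (rule cube_meas[OF meas])
  have eq: "distr M N (\<lambda>\<omega>. \<lambda>t\<in>{one}. X (\<lambda>l. t l + s l) \<omega>) = distr M N (\<lambda>\<omega>. \<lambda>t\<in>{one}. X t \<omega>)"
    using st unfolding stationary_increment_def N_def X_def by blast
  define E where "E = {f \<in> space N. r < norm (f one)}"
  have E: "E \<in> sets N" unfolding E_def N_def by measurable
  have m1: "(\<lambda>\<omega>. \<lambda>t\<in>{one}. X (\<lambda>l. t l + s l) \<omega>) \<in> measurable M N"
    unfolding N_def by (intro measurable_restrict) simp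
  have m2: "(\<lambda>\<omega>. \<lambda>t\<in>{one}. X t \<omega>) \<in> measurable M N"
    unfolding N_def by (intro measurable_restrict) simp
  have js: "(\<lambda>l. one l + s l) = j" by (simp add: one_def s_def fun_eq_iff)
  have "emeasure M {\<omega>\<in>space M. r < norm (X j \<omega>)} = emeasure (distr M N (\<lambda>\<omega>. \<lambda>t\<in>{one}. X (\<lambda>l. t l + s l) \<omega>)) E"
    using m1 E by (subst emeasure_distr) (auto simp: E_def N_def space_PiM js intro!: arg_cong[where f="emeasure M"])
  also have "\<dots> = emeasure (distr M N (\<lambda>\<omega>. \<lambda>t\<in>{one}. X t \<omega>)) E" by (simp add: eq)
  also have "\<dots> = emeasure M {\<omega>\<in>space M. r < norm (X one \<omega>)}"
    using m2 E by (subst emeasure_distr) (auto simp: E_def N_def space_PiM intro!: arg_cong[where f="emeasure M"])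
  finally show ?thesis by (simp add: X_def one_def)
qed


lemma part1:
  fixes M :: "'a measure" and G :: "('d::{finite,linorder} \<Rightarrow> int) \<Rightarrow> 'a \<Rightarrow> real^'n"
  assumes P: "prob_space M"
    and meas: "\<And>t. G t \<in> borel_measurable M"
    and st: "stationary_increment M G"
    and lm: "\<exists>\<delta>>0. log_moment M (\<lambda>\<omega>. cube_incr (\<lambda>u. G u \<omega>) (\<lambda>_. 1)) (real CARD('d)) \<delta>"
  shows "as_conclusion M G"
  unfolding as_conclusion_def
proof (intro allI impI)
  fix \<Theta> :: "'d \<Rightarrow> real^'n^'n" and t :: "'d \<Rightarrow> int"
  assume adm: "admissible_Theta \<Theta>"
  obtain \<delta> where \<delta>: "\<delta> > 0" "log_moment M (\<lambda>\<omega>. cube_incr (\<lambda>u. G u \<omega>) (\<lambda>_. 1)) (real CARD('d)) \<delta>"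
    using lm by blast
  obtain lam C where lam: "lam > 0" and tb: "\<And>k x. norm (mat_exp (star_Theta (\<lambda>l. t l - int (k l)) \<Theta>) *v x)
        \<le> exp (C - lam * (\<Sum>l\<in>UNIV. real (k l))) * norm x"
    using term_bound[OF adm, of t] by blast
  define X where "X j \<omega> = cube_incr (\<lambda>u. G u \<omega>) j" for j \<omega>
  have mX: "X j \<in> borel_measurable M" for j unfolding X_def by (rule cube_meas[OF meas])
  define g where "g k = (\<lambda>l. t l - int (k l))" for k :: "'d \<Rightarrow> nat"
  define Z where "Z k \<omega> = norm (X (g k) \<omega>)" for k \<omega>
  have AEs: "AE \<omega> in M. (\<lambda>k. exp (- lam * (\<Sum>l\<in>UNIV. real (k l))) * Z k \<omega>) summable_on UNIV"
  proof (rule as_summable[OF P, where Zo="\<lambda>\<omega>. norm (X (\<lambda>_. 1) \<omega>)" and p="real CARD('d) + \<delta>"])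
    show "Z k \<in> borel_measurable M" for k unfolding Z_def using mX by measurable
    show "(\<lambda>\<omega>. norm (X (\<lambda>_. 1) \<omega>)) \<in> borel_measurable M" using mX by measurable
    show "0 \<le> Z k \<omega>" for k \<omega> by (simp add: Z_def)
    show "emeasure M {\<omega> \<in> space M. r < Z k \<omega>} = emeasure M {\<omega> \<in> space M. r < norm (X (\<lambda>_. 1) \<omega>)}" for k r
      unfolding Z_def X_def by (rule ident_distr[OF meas st])
    show "(\<integral>\<^sup>+\<omega>. ennreal ((if norm (X (\<lambda>_. 1) \<omega>) > 1 then ln (norm (X (\<lambda>_. 1) \<omega>)) else 0) powr (real CARD('d) + \<delta>)) \<partial>M) < \<infinity>"
      using \<delta>(2) unfolding X_def by (simp add: log_moment_def)
    show "real CARD('d) < real CARD('d) + \<delta>" using \<delta>(1) by simp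
  qed (rule lam)
  define D where "D = {j :: 'd \<Rightarrow> int. \<forall>l. j l \<le> t l}"
  have bij: "bij_betw g UNIV D"
  proof (rule bij_betwI')
    show "(g x = g y) = (x = y)" for x y by (auto simp: g_def fun_eq_iff)
    show "g x \<in> D" for x by (auto simp: g_def D_def)
    show "\<exists>x\<in>UNIV. y = g x" if "y \<in> D" for y
      using that by (intro bexI[of _ "\<lambda>l. nat (t l - y l)"]) (auto simp: g_def D_def fun_eq_iff)
  qed
  show "AE \<omega> in M. iconv coords (box_sum \<Theta> (\<lambda>u. G u \<omega>) t)
          \<and> (\<lambda>j. norm (mat_exp (star_Theta j \<Theta>) *v cube_incr (\<lambda>u. G u \<omega>) j)) summable_on {j. \<forall>l. j l \<le> t l}"
    using AEs
  proof (rule AE_mp, intro AE_I2 impI)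
    fix \<omega> assume sm: "(\<lambda>k. exp (- lam * (\<Sum>l\<in>UNIV. real (k l))) * Z k \<omega>) summable_on UNIV"
    define h where "h = (\<lambda>j. norm (mat_exp (star_Theta j \<Theta>) *v cube_incr (\<lambda>u. G u \<omega>) j))"
    have "(\<lambda>k. h (g k)) summable_on UNIV"
    proof (rule summable_on_comparison_test[OF summable_on_cmult_right[OF sm, of "exp C"]])
      fix k :: "'d \<Rightarrow> nat"
      have "h (g k) \<le> exp (C - lam * (\<Sum>l\<in>UNIV. real (k l))) * Z k \<omega>"
        unfolding h_def Z_def X_def g_def by (rule tb)
      also have "\<dots> = exp C * (exp (- lam * (\<Sum>l\<in>UNIV. real (k l))) * Z k \<omega>)"
        by (simp add: exp_diff exp_minus field_simps)
      finally show "h (g k) \<le> exp C * (exp (- lam * (\<Sum>l\<in>UNIV. real (k l))) * Z k \<omega>)" .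
      show "0 \<le> h (g k)" by (simp add: h_def)
    qed
    hence hs: "h summable_on D" using summable_on_reindex_bij_betw[OF bij] by blast
    have "iconv coords (\<lambda>Mv. \<Sum>j\<in>{j. \<forall>l. - int (Mv l) \<le> j l \<and> j l \<le> t l}.
             mat_exp (star_Theta j \<Theta>) *v cube_incr (\<lambda>u. G u \<omega>) j)"
      by (rule iconv_coords) (use hs in \<open>simp add: h_def D_def\<close>)
    moreover have "box_sum \<Theta> (\<lambda>u. G u \<omega>) t = (\<lambda>Mv. \<Sum>j\<in>{j. \<forall>l. - int (Mv l) \<le> j l \<and> j l \<le> t l}.
             mat_exp (star_Theta j \<Theta>) *v cube_incr (\<lambda>u. G u \<omega>) j)"
      by (simp add: box_sum_def fun_eq_iff)
    ultimately show "iconv coords (box_sum \<Theta> (\<lambda>u. G u \<omega>) t)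
          \<and> (\<lambda>j. norm (mat_exp (star_Theta j \<Theta>) *v cube_incr (\<lambda>u. G u \<omega>) j)) summable_on {j. \<forall>l. j l \<le> t l}"
      using hs by (simp add: h_def D_def)
  qed
qed


lemma incr_eq_G1:
  fixes G :: "('d::finite \<Rightarrow> int) \<Rightarrow> 'a \<Rightarrow> real^'n"
  assumes hyp: "\<forall>t. (\<exists>l. t l = 0) \<longrightarrow> (AE \<omega> in M. G t \<omega> = 0)"
  shows "AE \<omega> in M. cube_incr (\<lambda>u. G u \<omega>) (\<lambda>_. 1) = G (\<lambda>_. 1) \<omega>"
proof -
  define P where "P S = (\<lambda>l::'d. (1::int) - (if l \<in> S then 1 else 0))" for S
  have "AE \<omega> in M. \<forall>S\<in>Pow (UNIV::'d set) - {{}}. G (P S) \<omega> = 0"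
  proof (rule AE_finite_allI)
    fix S :: "'d set" assume "S \<in> Pow UNIV - {{}}"
    then obtain l where "l \<in> S" by auto
    hence "P S l = 0" by (simp add: P_def)
    thus "AE \<omega> in M. G (P S) \<omega> = 0" using hyp by blast
  qed simp
  thus ?thesis
  proof (rule AE_mp, intro AE_I2 impI)
    fix \<omega> assume z: "\<forall>S\<in>Pow (UNIV::'d set) - {{}}. G (P S) \<omega> = 0"
    have "cube_incr (\<lambda>u. G u \<omega>) (\<lambda>_. 1) = (\<Sum>S\<in>Pow UNIV. ((-1::real) ^ card S) *\<^sub>R G (P S) \<omega>)"
      by (simp add: cube_incr_def P_def)
    also have "\<dots> = ((-1::real) ^ card ({}::'d set)) *\<^sub>R G (P {}) \<omega> + (\<Sum>S\<in>Pow UNIV - {{}}. ((-1::real) ^ card S) *\<^sub>R G (P S) \<omega>)"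
      by (subst sum.remove[of _ "{}"]) auto
    also have "(\<Sum>S\<in>Pow UNIV - {{}}. ((-1::real) ^ card S) *\<^sub>R G (P S) \<omega>) = 0"
      using z by (intro sum.neutral) auto
    also have "P {} = (\<lambda>_. 1)" by (simp add: P_def fun_eq_iff)
    finally show "cube_incr (\<lambda>u. G u \<omega>) (\<lambda>_. 1) = G (\<lambda>_. 1) \<omega>" by simp
  qed
qed

theorem mainTheorem3:
  fixes M :: "'a measure" and G :: "('d::{finite,linorder} \<Rightarrow> int) \<Rightarrow> 'a \<Rightarrow> real^'n"
  assumes "prob_space M"
    and "\<And>t. G t \<in> borel_measurable M"
    and "stationary_increment M G"
  shows "((\<exists>\<delta>>0. log_moment M (\<lambda>\<omega>. cube_incr (\<lambda>u. G u \<omega>) (\<lambda>_. 1)) (real CARD('d)) \<delta>)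
            \<longrightarrow> as_conclusion M G)
       \<and> (((\<forall>t. (\<exists>l. t l = 0) \<longrightarrow> (AE \<omega> in M. G t \<omega> = 0))
            \<and> (\<exists>\<delta>>0. log_moment M (G (\<lambda>_. 1)) (real CARD('d)) \<delta>))
            \<longrightarrow> as_conclusion M G)"
proof (intro conjI impI)
  assume "\<exists>\<delta>>0. log_moment M (\<lambda>\<omega>. cube_incr (\<lambda>u. G u \<omega>) (\<lambda>_. 1)) (real CARD('d)) \<delta>"
  thus "as_conclusion M G" using part1[OF assms] by blast
next
  assume h: "(\<forall>t. (\<exists>l. t l = 0) \<longrightarrow> (AE \<omega> in M. G t \<omega> = 0))
            \<and> (\<exists>\<delta>>0. log_moment M (G (\<lambda>_. 1)) (real CARD('d)) \<delta>)"
  then obtain \<delta> where \<delta>: "\<delta> > 0" "log_moment M (G (\<lambda>_. 1)) (real CARD('d)) \<delta>" by blast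
  have ae: "AE \<omega> in M. cube_incr (\<lambda>u. G u \<omega>) (\<lambda>_. 1) = G (\<lambda>_. 1) \<omega>"
    using incr_eq_G1[of G M] h by blast
  have "log_moment M (\<lambda>\<omega>. cube_incr (\<lambda>u. G u \<omega>) (\<lambda>_. 1)) (real CARD('d)) \<delta>"
    using \<delta>(2) unfolding log_moment_def
    by (subst nn_integral_cong_AE[OF AE_mp[OF ae AE_I2]]) auto
  thus "as_conclusion M G" using part1[OF assms] \<delta>(1) by blast
qed


end
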